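(* Assume that $R,\dot R,\ddot R,\dddot R$ satisfy the bicolored tetrahedron equations (BTE) for every $\sigma\in\mathbb{Z}/2\mathbb{Z}$ and all spectral parameters, and that $\dddot R^{[\sigma]}(r_1,r_2,r_3)$ is invertible for every $\sigma$ and all $r_1,r_2,r_3\in C$. Fix $L\ge 1$ and planes $1_1<\dots<1_{2L}$ with arbitrary parameters $r_{1_l}\in C$, and let $2<3<4$ be three further planes, all larger than every $1_l$, with arbitrary parameters $r_2,r_3,r_4\in C$. Then for every $\sigma\in\mathbb{Z}/2\mathbb{Z}$ the trace reductions satisfy the bicolored Yang--Baxter equation $$\mathbf{R}^{[\sigma]}_{23}\,\dot{\mathbf{R}}^{[\sigma+1]}_{24}\,\ddot{\mathbf{R}}^{[\sigma]}_{34}=\ddot{\mathbf{R}}^{[\sigma+1]}_{34}\,\dot{\mathbf{R}}^{[\sigma]}_{24}\,\mathbf{R}^{[\sigma+1]}_{23}$$ as operators on $\bigotimes_{l}\bigl(V_{(1_l2)}\otimes V_{(1_l3)}\otimes V_{(1_l4)}\bigr)$.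
   Context: Let $V$ be a finite-dimensional complex vector space and $C$ a set (of spectral parameters). Let $R,\dot R,\ddot R,\dddot R:\mathbb{Z}/2\mathbb{Z}\times C^3\to\mathrm{End}(V\otimes V\otimes V)$ be maps; write $X^{[\sigma]}(r_1,r_2,r_3)$ for the value of $X\in\{R,\dot R,\ddot R,\dddot R\}$ at $(\sigma,r_1,r_2,r_3)$. Superscript colors $[\sigma]$ are always read modulo 2. Notation: consider a finite totally ordered set of "planes", each plane $\alpha$ carrying a parameter $r_\alpha\in C$. For each pair $\alpha<\beta$ let $V_{(\alpha\beta)}$ be a copy of $V$. For $\alpha<\beta<\gamma$, $X^{[\sigma]}_{(\alpha\beta\gamma)}$ denotes the operator on the tensor product of all the spaces $V_{(\cdot\cdot)}$ under consideration that acts as $X^{[\sigma]}(r_\alpha,r_\beta,r_\gamma)$ on $V_{(\alpha\beta)}\otimes V_{(\alpha\gamma)}\otimes V_{(\beta\gamma)}$ (in this order) and as the identity on all other factors. Bicolored tetrahedron equations (BTE$[\sigma]$): for any four planes $1<2<3<4$ with arbitrary parameters $r_1,r_2,r_3,r_4\in C$, on $V_{(12)}\otimes V_{(13)}\otimes V_{(14)}\otimes V_{(23)}\otimes V_{(24)}\otimes V_{(34)}$, $$R^{[\sigma]}_{(123)}\dot R^{[\sigma+1]}_{(124)}\ddot R^{[\sigma]}_{(134)}\dddot R^{[\sigma+1]}_{(234)}=\dddot R^{[\sigma]}_{(234)}\ddot R^{[\sigma+1]}_{(134)}\dot R^{[\sigma]}_{(124)}R^{[\sigma+1]}_{(123)}.$$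 Trace reduction: given planes $1_1<\dots<1_{2L}$ and planes $\alpha<\beta$ larger than all $1_l$, define $$\mathbf{R}^{[\sigma]}_{\alpha\beta}:=\mathrm{Tr}_{V_{(\alpha\beta)}}\Bigl(R^{[\sigma+1]}_{(1_1\alpha\beta)}R^{[\sigma+2]}_{(1_2\alpha\beta)}\cdots R^{[\sigma+2L]}_{(1_{2L}\alpha\beta)}\Bigr),$$ the partial trace over the factor $V_{(\alpha\beta)}$, an operator on $\bigotimes_l\bigl(V_{(1_l\alpha)}\otimes V_{(1_l\beta)}\bigr)$ (extended by the identity to other factors). $\dot{\mathbf R}$, $\ddot{\mathbf R}$ are defined in the same way with $R$ replaced by $\dot R$, $\ddot R$. *)

theory Defs
  imports Complex_Main
begin

text \<open>
  V is identified with C^d via a basis (indices 0..<d).  Planes are natural numbers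
  (with their natural order); the factor V_(alpha beta) is labelled by the pair (alpha, beta).
  A basis state of a tensor product over a finite set S of labels is a configuration
  c :: label => nat with c x < d on S and c x = 0 off S.  Operators are given by their
  matrix entries A out in.  Colours Z/2Z are represented by bool (True = 1).
\<close>

type_synonym label = "nat \<times> nat"
type_synonym cfg = "label \<Rightarrow> nat"
type_synonym op = "cfg \<Rightarrow> cfg \<Rightarrow> complex"
type_synonym mat3 = "(nat \<times> nat \<times> nat) \<Rightarrow> (nat \<times> nat \<times> nat) \<Rightarrow> complex"

text \<open>colour sigma + k in Z/2Z\<close>
definition col :: "bool \<Rightarrow> nat \<Rightarrow> bool" where
  "col \<sigma> k = (\<sigma> \<noteq> odd k)"

definition valid :: "nat \<Rightarrow> label set \<Rightarrow> cfg \<Rightarrow> bool" where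
  "valid d S c \<longleftrightarrow> (\<forall>x. (x \<in> S \<longrightarrow> c x < d) \<and> (x \<notin> S \<longrightarrow> c x = 0))"

definition cfgs :: "nat \<Rightarrow> label set \<Rightarrow> cfg set" where
  "cfgs d S = {c. valid d S c}"

definition op_mult :: "nat \<Rightarrow> label set \<Rightarrow> op \<Rightarrow> op \<Rightarrow> op" where
  "op_mult d S A B = (\<lambda>u i. \<Sum>e\<in>cfgs d S. A u e * B e i)"

definition op_id :: op where
  "op_id = (\<lambda>u i. if u = i then 1 else 0)"

definition op_prod :: "nat \<Rightarrow> label set \<Rightarrow> op list \<Rightarrow> op" where
  "op_prod d S As = foldr (op_mult d S) As op_id"

definition op_eq :: "nat \<Rightarrow> label set \<Rightarrow> op \<Rightarrow> op \<Rightarrow> bool" where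
  "op_eq d S A B \<longleftrightarrow> (\<forall>u i. valid d S u \<longrightarrow> valid d S i \<longrightarrow> A u i = B u i)"

definition loc :: "label set \<Rightarrow> label \<Rightarrow> label \<Rightarrow> label \<Rightarrow> mat3 \<Rightarrow> op" where
  "loc S a b c X = (\<lambda>u i. X (u a, u b, u c) (i a, i b, i c) *
       (if \<forall>x \<in> S - {a, b, c}. u x = i x then 1 else 0))"

definition Xop :: "label set \<Rightarrow> (nat \<Rightarrow> 'c) \<Rightarrow> (bool \<Rightarrow> 'c \<Rightarrow> 'c \<Rightarrow> 'c \<Rightarrow> mat3)
     \<Rightarrow> bool \<Rightarrow> nat \<Rightarrow> nat \<Rightarrow> nat \<Rightarrow> op" where
  "Xop S r X \<sigma> \<alpha> \<beta> \<gamma> = loc S (\<alpha>, \<beta>) (\<alpha>, \<gamma>) (\<beta>, \<gamma>) (X \<sigma> (r \<alpha>) (r \<beta>) (r \<gamma>))"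

definition six_space :: "nat \<Rightarrow> nat \<Rightarrow> nat \<Rightarrow> nat \<Rightarrow> label set" where
  "six_space a b c e = {(a,b), (a,c), (a,e), (b,c), (b,e), (c,e)}"

definition BTE :: "nat \<Rightarrow> (bool \<Rightarrow> 'c \<Rightarrow> 'c \<Rightarrow> 'c \<Rightarrow> mat3) \<Rightarrow> (bool \<Rightarrow> 'c \<Rightarrow> 'c \<Rightarrow> 'c \<Rightarrow> mat3)
     \<Rightarrow> (bool \<Rightarrow> 'c \<Rightarrow> 'c \<Rightarrow> 'c \<Rightarrow> mat3) \<Rightarrow> (bool \<Rightarrow> 'c \<Rightarrow> 'c \<Rightarrow> 'c \<Rightarrow> mat3) \<Rightarrow> bool \<Rightarrow> bool" where
  "BTE d R R1 R2 R3 \<sigma> \<longleftrightarrow>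
     (\<forall>(r :: nat \<Rightarrow> 'c) a b c e. a < b \<longrightarrow> b < c \<longrightarrow> c < e \<longrightarrow>
        (let S = six_space a b c e in
         op_eq d S
           (op_prod d S [Xop S r R \<sigma> a b c, Xop S r R1 (col \<sigma> 1) a b e,
                         Xop S r R2 \<sigma> a c e, Xop S r R3 (col \<sigma> 1) b c e])
           (op_prod d S [Xop S r R3 \<sigma> b c e, Xop S r R2 (col \<sigma> 1) a c e,
                         Xop S r R1 \<sigma> a b e, Xop S r R (col \<sigma> 1) a b c])))"

definition idx3 :: "nat \<Rightarrow> (nat \<times> nat \<times> nat) set" where
  "idx3 d = {(i, j, k). i < d \<and> j < d \<and> k < d}"

definition invertible3 :: "nat \<Rightarrow> mat3 \<Rightarrow> bool" where
  "invertible3 d X \<longleftrightarrow> (\<exists>Y. \<forall>u \<in> idx3 d. \<forall>w \<in> idx3 d.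
      (\<Sum>v \<in> idx3 d. X u v * Y v w) = (if u = w then 1 else 0) \<and>
      (\<Sum>v \<in> idx3 d. Y u v * X v w) = (if u = w then 1 else 0))"

definition restr :: "label set \<Rightarrow> cfg \<Rightarrow> cfg" where
  "restr T c = (\<lambda>x. if x \<in> T then c x else 0)"

definition ptrace :: "nat \<Rightarrow> label \<Rightarrow> op \<Rightarrow> op" where
  "ptrace d t A = (\<lambda>u i. \<Sum>k<d. A (u(t := k)) (i(t := k)))"

definition extend :: "label set \<Rightarrow> label set \<Rightarrow> op \<Rightarrow> op" where
  "extend S T A = (\<lambda>u i. A (restr T u) (restr T i) * (if \<forall>x \<in> S - T. u x = i x then 1 else 0))"

definition tr_space :: "nat list \<Rightarrow> nat \<Rightarrow> nat \<Rightarrow> label set" where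
  "tr_space ps \<alpha> \<beta> = (\<Union>p \<in> set ps. {(p, \<alpha>), (p, \<beta>)}) \<union> {(\<alpha>, \<beta>)}"

definition trace_red :: "nat \<Rightarrow> label set \<Rightarrow> nat list \<Rightarrow> (nat \<Rightarrow> 'c)
     \<Rightarrow> (bool \<Rightarrow> 'c \<Rightarrow> 'c \<Rightarrow> 'c \<Rightarrow> mat3) \<Rightarrow> bool \<Rightarrow> nat \<Rightarrow> nat \<Rightarrow> op" where
  "trace_red d Sfull ps r X \<sigma> \<alpha> \<beta> =
     (let S = tr_space ps \<alpha> \<beta> in
      extend Sfull (S - {(\<alpha>, \<beta>)})
        (ptrace d (\<alpha>, \<beta>)
          (op_prod d S (map (\<lambda>l. Xop S r X (col \<sigma> (Suc l)) (ps ! l) \<alpha> \<beta>) [0..<length ps]))))"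

definition yb_space :: "nat list \<Rightarrow> nat \<Rightarrow> nat \<Rightarrow> nat \<Rightarrow> label set" where
  "yb_space ps b c e = (\<Union>p \<in> set ps. {(p, b), (p, c), (p, e)})"

end

theory Submission
  imports Defs
begin


definition nrm :: "nat \<Rightarrow> label set \<Rightarrow> op \<Rightarrow> op" where
  "nrm d S F = (\<lambda>u i. if valid d S u \<and> valid d S i then F u i else 0)"
definition mm :: "nat \<Rightarrow> label set \<Rightarrow> op \<Rightarrow> op \<Rightarrow> op" where
  "mm d S F G = nrm d S (op_mult d S F G)"
definition cadd :: "cfg \<Rightarrow> cfg \<Rightarrow> cfg" where
  "cadd x y = (\<lambda>l. x l + y l)"
definition trZ :: "nat \<Rightarrow> label set \<Rightarrow> op \<Rightarrow> op" where
  "trZ d Z F = (\<lambda>u i. \<Sum>z\<in>cfgs d Z. F (cadd u z) (cadd i z))"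

lemma finite_cfgs: "finite S \<Longrightarrow> finite (cfgs d S)"
proof -
  assume "finite S"
  have "cfgs d S \<subseteq> {f. \<forall>x. (x \<in> S \<longrightarrow> f x \<in> {..<d}) \<and> (x \<notin> S \<longrightarrow> f x = 0)}"
    by (auto simp: cfgs_def valid_def)
  then show ?thesis using finite_set_of_finite_funs[OF \<open>finite S\<close>, of "{..<d}" 0]
    by (meson finite_lessThan finite_subset)
qed

lemma valid_in: "valid d S u \<Longrightarrow> x \<in> S \<Longrightarrow> u x < d"
  unfolding valid_def by blast
lemma valid_out: "valid d S u \<Longrightarrow> x \<notin> S \<Longrightarrow> u x = 0"
  unfolding valid_def by blast
lemma validI: "(\<And>x. x \<in> S \<Longrightarrow> u x < d) \<Longrightarrow> (\<And>x. x \<notin> S \<Longrightarrow> u x = 0) \<Longrightarrow> valid d S u"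
  unfolding valid_def by blast
lemma cfgs_iff: "u \<in> cfgs d S \<longleftrightarrow> valid d S u"
  by (simp add: cfgs_def)

lemma valid_eq: "valid d S u \<Longrightarrow> valid d S v \<Longrightarrow> (\<And>x. x \<in> S \<Longrightarrow> u x = v x) \<Longrightarrow> u = v"
  by (rule ext) (metis valid_out)

lemma valid_restr: "valid d S u \<Longrightarrow> T \<subseteq> S \<Longrightarrow> valid d T (restr T u)"
  by (rule validI) (auto simp: restr_def valid_in)

lemma valid_cadd: "valid d A a \<Longrightarrow> valid d B b \<Longrightarrow> A \<inter> B = {} \<Longrightarrow> valid d (A \<union> B) (cadd a b)"
  apply (rule validI)
   apply (simp add: cadd_def) apply (metis add.commute add_0 disjoint_iff valid_in valid_out)
  apply (simp add: cadd_def valid_out)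
  done

lemma restr_cadd1: "valid d A a \<Longrightarrow> valid d B b \<Longrightarrow> A \<inter> B = {} \<Longrightarrow> restr A (cadd a b) = a"
  unfolding cadd_def restr_def by (rule ext) (metis add.right_neutral disjoint_iff valid_out)

lemma restr_cadd2: "valid d A a \<Longrightarrow> valid d B b \<Longrightarrow> A \<inter> B = {} \<Longrightarrow> restr B (cadd a b) = b"
  unfolding cadd_def restr_def by (rule ext) (metis add_0 disjoint_iff valid_out)

lemma cadd_restr: "valid d (A \<union> B) c \<Longrightarrow> A \<inter> B = {} \<Longrightarrow> cadd (restr A c) (restr B c) = c"
  unfolding cadd_def restr_def by (rule ext) (auto simp: valid_out)


lemma cfgs_split:
  assumes "A \<inter> B = {}"
  shows "sum f (cfgs d (A \<union> B)) = (\<Sum>a\<in>cfgs d A. \<Sum>b\<in>cfgs d B. f (cadd a b))"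
proof -
  have bij: "bij_betw (\<lambda>(a,b). cadd a b) (cfgs d A \<times> cfgs d B) (cfgs d (A \<union> B))"
  proof (rule bij_betw_byWitness[where f'="\<lambda>c. (restr A c, restr B c)"])
    show "(\<lambda>(a, b). cadd a b) ` (cfgs d A \<times> cfgs d B) \<subseteq> cfgs d (A \<union> B)"
      using valid_cadd assms by (auto simp: cfgs_iff)
    show "(\<lambda>c. (restr A c, restr B c)) ` cfgs d (A \<union> B) \<subseteq> cfgs d A \<times> cfgs d B"
      using valid_restr by (auto simp: cfgs_iff)
    show "\<forall>x \<in> cfgs d A \<times> cfgs d B. (restr A (case x of (a, b) \<Rightarrow> cadd a b), restr B (case x of (a, b) \<Rightarrow> cadd a b)) = x"
      using restr_cadd1 restr_cadd2 assms by (auto simp: cfgs_iff)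
    show "\<forall>y \<in> cfgs d (A \<union> B). (case (restr A y, restr B y) of (a, b) \<Rightarrow> cadd a b) = y"
      using cadd_restr assms by (auto simp: cfgs_iff)
  qed
  have "sum f (cfgs d (A \<union> B)) = (\<Sum>x\<in>cfgs d A \<times> cfgs d B. f ((\<lambda>(a,b). cadd a b) x))"
    using sum.reindex_bij_betw[OF bij, of f] by simp
  also have "\<dots> = (\<Sum>a\<in>cfgs d A. \<Sum>b\<in>cfgs d B. f (cadd a b))"
    by (simp add: sum.cartesian_product case_prod_beta)
  finally show ?thesis .
qed

lemma bij3:
  assumes "t1 \<noteq> t2" "t1 \<noteq> t3" "t2 \<noteq> t3"
  shows "bij_betw (\<lambda>z. (z t1, z t2, z t3)) (cfgs d {t1,t2,t3}) (idx3 d)"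
proof (rule bij_betw_byWitness[where f'="\<lambda>(i,j,k). (\<lambda>x. 0)(t1 := i, t2 := j, t3 := k)"])
  show "(\<lambda>z. (z t1, z t2, z t3)) ` cfgs d {t1, t2, t3} \<subseteq> idx3 d"
    by (auto simp: cfgs_iff idx3_def valid_in)
  show "(\<lambda>(i, j, k). (\<lambda>x. 0)(t1 := i, t2 := j, t3 := k)) ` idx3 d \<subseteq> cfgs d {t1, t2, t3}"
    using assms by (auto simp: cfgs_iff idx3_def intro!: validI split: if_splits)
  show "\<forall>x \<in> cfgs d {t1, t2, t3}.
         (case (x t1, x t2, x t3) of (i, j, k) \<Rightarrow> (\<lambda>x. 0)(t1 := i, t2 := j, t3 := k)) = x"
    using assms by (auto simp: cfgs_iff valid_out intro!: ext)
  show "\<forall>y \<in> idx3 d. (\<lambda>z. (z t1, z t2, z t3)) ((case y of (i, j, k) \<Rightarrow> (\<lambda>x. 0)(t1 := i, t2 := j, t3 := k))) = y"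
    using assms by auto
qed



lemma nrm_valid[simp]: "valid d S u \<Longrightarrow> valid d S i \<Longrightarrow> nrm d S F u i = F u i"
  by (simp add: nrm_def)

lemma op_mult_nrm_l: "valid d S u \<Longrightarrow> op_mult d S (nrm d S F) G u i = op_mult d S F G u i"
  unfolding op_mult_def by (rule sum.cong) (auto simp: cfgs_iff)
lemma op_mult_nrm_r: "valid d S i \<Longrightarrow> op_mult d S F (nrm d S G) u i = op_mult d S F G u i"
  unfolding op_mult_def by (rule sum.cong) (auto simp: cfgs_iff)

lemma mm_nrm_l[simp]: "mm d S (nrm d S F) G = mm d S F G"
  unfolding mm_def nrm_def by (auto intro!: ext simp: op_mult_nrm_l[unfolded nrm_def])
lemma mm_nrm_r[simp]: "mm d S F (nrm d S G) = mm d S F G"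
  unfolding mm_def nrm_def by (auto intro!: ext simp: op_mult_nrm_r[unfolded nrm_def])
lemma nrm_nrm[simp]: "nrm d S (nrm d S F) = nrm d S F"
  unfolding nrm_def by (intro ext) simp
lemma nrm_mm[simp]: "nrm d S (mm d S F G) = mm d S F G"
  unfolding mm_def by simp

lemma op_mult_assoc: "op_mult d S (op_mult d S F G) H = op_mult d S F (op_mult d S G H)"
  unfolding op_mult_def
  by (auto intro!: ext simp: sum_distrib_left sum_distrib_right mult.assoc intro: sum.swap)

lemma mm_assoc: "mm d S (mm d S F G) H = mm d S F (mm d S G H)"
proof -
  have "mm d S (mm d S F G) H = nrm d S (op_mult d S (op_mult d S F G) H)"
    by (metis mm_def mm_nrm_l)
  also have "\<dots> = nrm d S (op_mult d S F (op_mult d S G H))" by (simp add: op_mult_assoc)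
  also have "\<dots> = mm d S F (mm d S G H)" by (metis mm_def mm_nrm_r)
  finally show ?thesis .
qed

lemma op_mult_id_l: "finite S \<Longrightarrow> valid d S u \<Longrightarrow> op_mult d S op_id F u i = F u i"
  unfolding op_mult_def op_id_def
proof -
  assume "finite S" "valid d S u"
  have "(\<Sum>e\<in>cfgs d S. (if u = e then 1 else 0) * F e i) = (\<Sum>e\<in>cfgs d S. if u = e then F e i else 0)"
    by (rule sum.cong) auto
  then show "(\<Sum>e\<in>cfgs d S. (if u = e then 1 else 0) * F e i) = F u i"
    using \<open>finite S\<close> \<open>valid d S u\<close> by (simp add: finite_cfgs cfgs_iff)
qed
lemma op_mult_id_r: "finite S \<Longrightarrow> valid d S i \<Longrightarrow> op_mult d S F op_id u i = F u i"
  unfolding op_mult_def op_id_def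
proof -
  assume "finite S" "valid d S i"
  have "(\<Sum>e\<in>cfgs d S. F u e * (if e = i then 1 else 0)) = (\<Sum>e\<in>cfgs d S. if e = i then F u e else 0)"
    by (rule sum.cong) auto
  then show "(\<Sum>e\<in>cfgs d S. F u e * (if e = i then 1 else 0)) = F u i"
    using \<open>finite S\<close> \<open>valid d S i\<close> by (simp add: finite_cfgs cfgs_iff)
qed

lemma mm_one_l: "finite S \<Longrightarrow> mm d S (nrm d S op_id) F = nrm d S F"
  unfolding mm_def nrm_def by (intro ext) (simp add: op_mult_nrm_l[unfolded nrm_def] op_mult_id_l)
lemma mm_one_r: "finite S \<Longrightarrow> mm d S F (nrm d S op_id) = nrm d S F"
  unfolding mm_def nrm_def by (intro ext) (simp add: op_mult_nrm_r[unfolded nrm_def] op_mult_id_r)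

lemma op_prod_nrm: "nrm d S (op_prod d S Fs) = foldr (mm d S) (map (nrm d S) Fs) (nrm d S op_id)"
proof (induction Fs)
  case Nil then show ?case by (simp add: op_prod_def)
next
  case (Cons F Fs)
  have "nrm d S (op_prod d S (F # Fs)) = mm d S F (op_prod d S Fs)"
    by (simp add: op_prod_def mm_def)
  also have "\<dots> = mm d S (nrm d S F) (nrm d S (op_prod d S Fs))" by simp
  finally show ?case using Cons by simp
qed

lemma op_eq_nrm: "op_eq d S F G \<longleftrightarrow> nrm d S F = nrm d S G"
proof
  assume "op_eq d S F G" then show "nrm d S F = nrm d S G"
    unfolding op_eq_def nrm_def by (intro ext) auto
next
  assume h: "nrm d S F = nrm d S G"
  show "op_eq d S F G" unfolding op_eq_def
  proof (intro allI impI)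
    fix u i assume "valid d S u" "valid d S i"
    then show "F u i = G u i" using fun_cong[OF fun_cong[OF h, of u], of i] by simp
  qed
qed



lemma loc_ext:
  assumes "{a,b,c} \<subseteq> T" "T \<subseteq> W"
  shows "loc W a b c X = extend W T (loc T a b c X)"
proof (intro ext)
  fix u i
  have r: "restr T u a = u a" "restr T u b = u b" "restr T u c = u c"
          "restr T i a = i a" "restr T i b = i b" "restr T i c = i c"
    using assms by (auto simp: restr_def)
  have "(\<forall>x\<in>W - {a,b,c}. u x = i x) \<longleftrightarrow>
        ((\<forall>x\<in>T - {a,b,c}. restr T u x = restr T i x) \<and> (\<forall>x\<in>W - T. u x = i x))"
    using assms unfolding restr_def by auto
  then show "loc W a b c X u i = extend W T (loc T a b c X) u i"
    unfolding loc_def extend_def r by simp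
qed

lemma ext_nrm:
  assumes "T \<subseteq> W"
  shows "nrm d W (extend W T (nrm d T F)) = nrm d W (extend W T F)"
  unfolding nrm_def extend_def using valid_restr[OF _ assms] by (intro ext) auto

lemma ext_opeq:
  assumes "T \<subseteq> W" "op_eq d T F G"
  shows "nrm d W (extend W T F) = nrm d W (extend W T G)"
proof -
  have "nrm d T F = nrm d T G" using assms(2) op_eq_nrm by blast
  then show ?thesis by (metis ext_nrm[OF assms(1)])
qed

lemma ext_id:
  assumes "T \<subseteq> W"
  shows "nrm d W (extend W T op_id) = nrm d W op_id"
proof (intro ext)
  fix u i
  show "nrm d W (extend W T op_id) u i = nrm d W op_id u i"
  proof (cases "valid d W u \<and> valid d W i")
    case True
    have "(restr T u = restr T i \<and> (\<forall>x\<in>W - T. u x = i x)) \<longleftrightarrow> u = i"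
    proof
      assume h: "restr T u = restr T i \<and> (\<forall>x\<in>W - T. u x = i x)"
      show "u = i"
      proof (rule valid_eq[of d W])
        fix x assume "x \<in> W"
        have "restr T u x = restr T i x" using h by simp
        then show "u x = i x" using h \<open>x \<in> W\<close>
          by (cases "x \<in> T") (auto simp: restr_def)
      qed (use True in auto)
    qed auto
    then show ?thesis using True unfolding extend_def op_id_def by auto
  qed (auto simp: nrm_def)
qed

lemma ext_mult:
  assumes fin: "finite W" and TW: "T \<subseteq> W"
  shows "mm d W (extend W T F) (extend W T G) = nrm d W (extend W T (mm d T F G))"
proof (intro ext)
  fix u i
  show "mm d W (extend W T F) (extend W T G) u i = nrm d W (extend W T (mm d T F G)) u i"
  proof (cases "valid d W u \<and> valid d W i")
    case True
    then have vu: "valid d W u" and vi: "valid d W i" by auto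
    let ?U = "W - T"
    have WU: "W = T \<union> ?U" and dis: "T \<inter> ?U = {}" using TW by auto
    define ind where "ind = (if \<forall>x\<in>?U. u x = i x then 1 else 0 :: complex)"
    have inner: "(\<Sum>b\<in>cfgs d ?U. extend W T F u (cadd a b) * extend W T G (cadd a b) i)
        = F (restr T u) a * G a (restr T i) * ind" if va: "valid d T a" for a
    proof -
      have "(\<Sum>b\<in>cfgs d ?U. extend W T F u (cadd a b) * extend W T G (cadd a b) i)
          = (\<Sum>b\<in>cfgs d ?U. if b = restr ?U u then F (restr T u) a * G a (restr T i) * ind else 0)"
      proof (rule sum.cong[OF refl])
        fix b assume "b \<in> cfgs d ?U"
        then have vb: "valid d ?U b" by (simp add: cfgs_iff)
        have r1: "restr T (cadd a b) = a" using restr_cadd1[OF va vb dis] .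
        have cb: "\<forall>x\<in>?U. cadd a b x = b x" using va by (auto simp: cadd_def valid_out)
        have e1: "(\<forall>x\<in>?U. u x = b x) \<longleftrightarrow> b = restr ?U u"
        proof
          assume h: "\<forall>x\<in>?U. u x = b x"
          show "b = restr ?U u"
            by (rule valid_eq[OF vb valid_restr[OF vu]]) (use h in \<open>auto simp: restr_def\<close>)
        qed (auto simp: restr_def)
        show "extend W T F u (cadd a b) * extend W T G (cadd a b) i =
             (if b = restr ?U u then F (restr T u) a * G a (restr T i) * ind else 0)"
          unfolding extend_def r1 using cb e1 by (auto simp: ind_def restr_def)
      qed
      also have "\<dots> = F (restr T u) a * G a (restr T i) * ind"
        using valid_restr[OF vu, of ?U] fin by (simp add: finite_cfgs cfgs_iff)
      finally show ?thesis .
    qed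
    have "mm d W (extend W T F) (extend W T G) u i = op_mult d W (extend W T F) (extend W T G) u i"
      using True by (simp add: mm_def)
    also have "\<dots> = (\<Sum>a\<in>cfgs d T. \<Sum>b\<in>cfgs d ?U. extend W T F u (cadd a b) * extend W T G (cadd a b) i)"
      unfolding op_mult_def by (subst WU, subst cfgs_split[OF dis]) (rule refl)
    also have "\<dots> = (\<Sum>a\<in>cfgs d T. F (restr T u) a * G a (restr T i) * ind)"
      by (rule sum.cong[OF refl]) (simp add: inner cfgs_iff)
    also have "\<dots> = mm d T F G (restr T u) (restr T i) * ind"
      using valid_restr[OF vu TW] valid_restr[OF vi TW]
      by (simp add: mm_def op_mult_def sum_distrib_right)
    also have "\<dots> = nrm d W (extend W T (mm d T F G)) u i"
      using True by (simp add: extend_def ind_def)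
    finally show ?thesis .
  qed (auto simp: nrm_def mm_def)
qed

lemma ext_prod:
  assumes fin: "finite W" "finite T" and TW: "T \<subseteq> W"
  shows "nrm d W (op_prod d W (map (extend W T) Fs)) = nrm d W (extend W T (op_prod d T Fs))"
proof (induction Fs)
  case Nil
  then show ?case using ext_id[OF TW] by (simp add: op_prod_def)
next
  case (Cons F Fs)
  have "nrm d W (op_prod d W (map (extend W T) (F # Fs))) = mm d W (extend W T F) (op_prod d W (map (extend W T) Fs))"
    by (simp add: op_prod_def mm_def)
  also have "\<dots> = mm d W (extend W T F) (nrm d W (op_prod d W (map (extend W T) Fs)))" by simp
  also have "\<dots> = mm d W (extend W T F) (extend W T (op_prod d T Fs))" using Cons by simp
  also have "\<dots> = nrm d W (extend W T (mm d T F (op_prod d T Fs)))" by (rule ext_mult[OF fin(1) TW])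
  also have "\<dots> = nrm d W (extend W T (op_mult d T F (op_prod d T Fs)))"
    by (simp add: mm_def ext_nrm[OF TW])
  finally show ?case by (simp add: op_prod_def)
qed



lemma ext_mult_disj:
  assumes fin: "finite W" and AW: "A \<subseteq> W" and BW: "B \<subseteq> W" and dis: "A \<inter> B = {}"
    and vu: "valid d W u" and vi: "valid d W i"
  shows "op_mult d W (extend W A F) (extend W B G) u i =
         F (restr A u) (restr A i) * G (restr B u) (restr B i) *
         (if \<forall>x\<in>W - (A \<union> B). u x = i x then 1 else 0)"
proof -
  define e0 where "e0 = (\<lambda>x. if x \<in> A then i x else u x)"
  have ve0: "valid d W e0"
    by (rule validI) (use AW vu vi in \<open>auto simp: e0_def valid_in valid_out\<close>)
  have "op_mult d W (extend W A F) (extend W B G) u i =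
     (\<Sum>e\<in>cfgs d W. if e = e0 then F (restr A u) (restr A i) * G (restr B u) (restr B i) *
         (if \<forall>x\<in>W - (A \<union> B). u x = i x then 1 else 0) else 0)"
    unfolding op_mult_def
  proof (rule sum.cong[OF refl])
    fix e assume "e \<in> cfgs d W"
    then have ve: "valid d W e" by (simp add: cfgs_iff)
    show "extend W A F u e * extend W B G e i =
      (if e = e0 then F (restr A u) (restr A i) * G (restr B u) (restr B i) *
         (if \<forall>x\<in>W - (A \<union> B). u x = i x then 1 else 0) else 0)"
    proof (cases "e = e0")
      case True
      have "restr A e0 = restr A i" "restr B e0 = restr B u"
        using dis by (auto simp: restr_def e0_def intro!: ext)
      moreover have "(\<forall>x\<in>W - A. u x = e0 x)" by (auto simp: e0_def)
      moreover have "(\<forall>x\<in>W - B. e0 x = i x) \<longleftrightarrow> (\<forall>x\<in>W - (A \<union> B). u x = i x)"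
        using dis by (auto simp: e0_def)
      ultimately show ?thesis using True by (simp add: extend_def)
    next
      case False
      then obtain x where "x \<in> W" "e x \<noteq> e0 x" using valid_eq[OF ve ve0] by blast
      then have "(x \<in> W - B \<and> e x \<noteq> i x) \<or> (x \<in> W - A \<and> u x \<noteq> e x)"
        using dis by (auto simp: e0_def split: if_splits)
      then have "extend W A F u e = 0 \<or> extend W B G e i = 0"
        unfolding extend_def by auto
      then show ?thesis using False by auto
    qed
  qed
  also have "\<dots> = F (restr A u) (restr A i) * G (restr B u) (restr B i) *
         (if \<forall>x\<in>W - (A \<union> B). u x = i x then 1 else 0)"
    using fin ve0 by (simp add: finite_cfgs cfgs_iff)
  finally show ?thesis .
qed

lemma ext_comm:
  assumes fin: "finite W" and AW: "A \<subseteq> W" and BW: "B \<subseteq> W" and dis: "A \<inter> B = {}"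
  shows "mm d W (extend W A F) (extend W B G) = mm d W (extend W B G) (extend W A F)"
proof (intro ext)
  fix u i
  show "mm d W (extend W A F) (extend W B G) u i = mm d W (extend W B G) (extend W A F) u i"
  proof (cases "valid d W u \<and> valid d W i")
    case True
    have dis': "B \<inter> A = {}" using dis by auto
    show ?thesis using True ext_mult_disj[OF fin AW BW dis, of d u i F G]
        ext_mult_disj[OF fin BW AW dis', of d u i G F]
      by (simp add: mm_def Un_commute mult_ac)
  qed (auto simp: mm_def nrm_def)
qed

lemma cadd_S: "valid d Z z \<Longrightarrow> x \<notin> Z \<Longrightarrow> cadd e z x = e x"
  by (simp add: cadd_def valid_out)

lemma ext_Z_entry:
  assumes dis: "S \<inter> Z = {}" and W: "W = S \<union> Z"
    and ve: "valid d S e" and vi: "valid d S i" and vz: "valid d Z z" and vz': "valid d Z z'"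
  shows "extend W Z g (cadd e z') (cadd i z) = g z' z * (if e = i then 1 else 0)"
proof -
  have "restr Z (cadd e z') = z'" "restr Z (cadd i z) = z"
    using restr_cadd2 dis ve vi vz vz' by auto
  moreover have "(\<forall>x\<in>W - Z. cadd e z' x = cadd i z x) \<longleftrightarrow> e = i"
  proof
    assume h: "\<forall>x\<in>W - Z. cadd e z' x = cadd i z x"
    show "e = i"
    proof (rule valid_eq[OF ve vi])
      fix x assume "x \<in> S" then have "x \<in> W - Z" "x \<notin> Z" using dis W by auto
      then show "e x = i x" using h cadd_S[OF vz', of x e] cadd_S[OF vz, of x i] by auto
    qed
  next
    assume "e = i" then show "\<forall>x\<in>W - Z. cadd e z' x = cadd i z x"
      using cadd_S[OF vz'] cadd_S[OF vz] by auto
  qed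
  ultimately show ?thesis by (simp add: extend_def)
qed

lemma trZ_mm:
  assumes dis: "S \<inter> Z = {}" and W: "W = S \<union> Z" and vu: "valid d S u" and vi: "valid d S i"
  shows "trZ d Z (mm d W F G) u i = trZ d Z (op_mult d W F G) u i"
  unfolding trZ_def mm_def
  by (rule sum.cong[OF refl]) (use valid_cadd dis W vu vi in \<open>auto simp: cfgs_iff\<close>)

lemma trZ_nrm:
  assumes dis: "S \<inter> Z = {}" and W: "W = S \<union> Z" and vu: "valid d S u" and vi: "valid d S i"
  shows "trZ d Z (nrm d W F) u i = trZ d Z F u i"
  unfolding trZ_def
  by (rule sum.cong[OF refl]) (use valid_cadd dis W vu vi in \<open>auto simp: cfgs_iff\<close>)

lemma trZ_cyc:
  assumes fin: "finite S" "finite Z" and dis: "S \<inter> Z = {}" and W: "W = S \<union> Z"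
    and vu: "valid d S u" and vi: "valid d S i"
  shows "trZ d Z (mm d W F (extend W Z g)) u i = trZ d Z (mm d W (extend W Z g) F) u i"
proof -
  have h1: "op_mult d W F (extend W Z g) (cadd u z) (cadd i z) =
      (\<Sum>z'\<in>cfgs d Z. F (cadd u z) (cadd i z') * g z' z)" if vz: "valid d Z z" for z
  proof -
    have "op_mult d W F (extend W Z g) (cadd u z) (cadd i z) =
       (\<Sum>e\<in>cfgs d S. \<Sum>z'\<in>cfgs d Z. F (cadd u z) (cadd e z') * extend W Z g (cadd e z') (cadd i z))"
      unfolding op_mult_def W by (rule cfgs_split[OF dis])
    also have "\<dots> = (\<Sum>e\<in>cfgs d S. \<Sum>z'\<in>cfgs d Z. if e = i then F (cadd u z) (cadd i z') * g z' z else 0)"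
      by (intro sum.cong refl) (simp add: ext_Z_entry[OF dis W _ vi vz] cfgs_iff)
    also have "\<dots> = (\<Sum>z'\<in>cfgs d Z. \<Sum>e\<in>cfgs d S. if e = i then F (cadd u z) (cadd i z') * g z' z else 0)"
      by (rule sum.swap)
    also have "\<dots> = (\<Sum>z'\<in>cfgs d Z. F (cadd u z) (cadd i z') * g z' z)"
      using fin vi by (simp add: finite_cfgs cfgs_iff)
    finally show ?thesis .
  qed
  have h2: "op_mult d W (extend W Z g) F (cadd u z) (cadd i z) =
      (\<Sum>z'\<in>cfgs d Z. g z z' * F (cadd u z') (cadd i z))" if vz: "valid d Z z" for z
  proof -
    have "op_mult d W (extend W Z g) F (cadd u z) (cadd i z) =
       (\<Sum>e\<in>cfgs d S. \<Sum>z'\<in>cfgs d Z. extend W Z g (cadd u z) (cadd e z') * F (cadd e z') (cadd i z))"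
      unfolding op_mult_def W by (rule cfgs_split[OF dis])
    also have "\<dots> = (\<Sum>e\<in>cfgs d S. \<Sum>z'\<in>cfgs d Z. if u = e then g z z' * F (cadd u z') (cadd i z) else 0)"
      by (intro sum.cong refl) (simp add: ext_Z_entry[OF dis W vu _ _ vz] cfgs_iff)
    also have "\<dots> = (\<Sum>z'\<in>cfgs d Z. \<Sum>e\<in>cfgs d S. if u = e then g z z' * F (cadd u z') (cadd i z) else 0)"
      by (rule sum.swap)
    also have "\<dots> = (\<Sum>z'\<in>cfgs d Z. g z z' * F (cadd u z') (cadd i z))"
      using fin vu by (simp add: finite_cfgs cfgs_iff)
    finally show ?thesis .
  qed
  have "trZ d Z (mm d W F (extend W Z g)) u i = trZ d Z (op_mult d W F (extend W Z g)) u i"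
    by (rule trZ_mm[OF dis W vu vi])
  also have "\<dots> = (\<Sum>z\<in>cfgs d Z. \<Sum>z'\<in>cfgs d Z. F (cadd u z) (cadd i z') * g z' z)"
    unfolding trZ_def by (rule sum.cong[OF refl]) (simp add: h1 cfgs_iff)
  also have "\<dots> = (\<Sum>z'\<in>cfgs d Z. \<Sum>z\<in>cfgs d Z. F (cadd u z) (cadd i z') * g z' z)"
    by (rule sum.swap)
  also have "\<dots> = trZ d Z (op_mult d W (extend W Z g) F) u i"
    unfolding trZ_def by (rule sum.cong[OF refl]) (simp add: h2 cfgs_iff mult.commute)
  also have "\<dots> = trZ d Z (mm d W (extend W Z g) F) u i"
    by (rule trZ_mm[symmetric, OF dis W vu vi])
  finally show ?thesis .
qed

lemma loc_inv:
  assumes fin: "finite W" and dt: "t1 \<noteq> t2" "t1 \<noteq> t3" "t2 \<noteq> t3" and ZW: "{t1,t2,t3} \<subseteq> W"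
    and XY: "\<forall>u \<in> idx3 d. \<forall>w \<in> idx3 d. (\<Sum>v \<in> idx3 d. X u v * Y v w) = (if u = w then 1 else 0)"
  shows "mm d W (loc W t1 t2 t3 X) (loc W t1 t2 t3 Y) = nrm d W op_id"
proof -
  let ?Z = "{t1,t2,t3}"
  have fZ: "finite ?Z" by simp
  have inner: "mm d ?Z (loc ?Z t1 t2 t3 X) (loc ?Z t1 t2 t3 Y) = nrm d ?Z op_id"
  proof (intro ext)
    fix u i
    show "mm d ?Z (loc ?Z t1 t2 t3 X) (loc ?Z t1 t2 t3 Y) u i = nrm d ?Z op_id u i"
    proof (cases "valid d ?Z u \<and> valid d ?Z i")
      case True
      have iu: "(u t1, u t2, u t3) \<in> idx3 d" "(i t1, i t2, i t3) \<in> idx3 d"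
        using True by (auto simp: idx3_def valid_in)
      have "op_mult d ?Z (loc ?Z t1 t2 t3 X) (loc ?Z t1 t2 t3 Y) u i =
          (\<Sum>e\<in>cfgs d ?Z. (\<lambda>v. X (u t1, u t2, u t3) v * Y v (i t1, i t2, i t3)) ((\<lambda>z. (z t1, z t2, z t3)) e))"
        unfolding op_mult_def loc_def by simp
      also have "\<dots> = (\<Sum>v\<in>idx3 d. X (u t1, u t2, u t3) v * Y v (i t1, i t2, i t3))"
        by (rule sum.reindex_bij_betw[OF bij3[OF dt]])
      also have "\<dots> = (if (u t1, u t2, u t3) = (i t1, i t2, i t3) then 1 else 0)"
        using XY iu by blast
      also have "\<dots> = op_id u i"
      proof -
        have "(u t1, u t2, u t3) = (i t1, i t2, i t3) \<longleftrightarrow> u = i"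
        proof
          assume "(u t1, u t2, u t3) = (i t1, i t2, i t3)"
          then show "u = i" using True by (intro valid_eq[of d ?Z]) auto
        qed auto
        then show ?thesis by (simp add: op_id_def)
      qed
      finally show ?thesis using True by (simp add: mm_def)
    qed (auto simp: mm_def nrm_def)
  qed
  have "mm d W (loc W t1 t2 t3 X) (loc W t1 t2 t3 Y) =
        mm d W (extend W ?Z (loc ?Z t1 t2 t3 X)) (extend W ?Z (loc ?Z t1 t2 t3 Y))"
    using loc_ext[OF _ ZW] by simp
  also have "\<dots> = nrm d W (extend W ?Z (mm d ?Z (loc ?Z t1 t2 t3 X) (loc ?Z t1 t2 t3 Y)))"
    by (rule ext_mult[OF fin ZW])
  also have "\<dots> = nrm d W (extend W ?Z op_id)"
    unfolding inner by (rule ext_nrm[OF ZW])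
  also have "\<dots> = nrm d W op_id" by (rule ext_id[OF ZW])
  finally show ?thesis .
qed



lemma F_entry:
  assumes tS: "t \<in> Sj" "Sj - {t} \<subseteq> S" and tZ: "t \<in> Z" and dis: "S \<inter> Z = {}" and W: "W = S \<union> Z"
    and vx: "valid d S x" and vy: "valid d S y" and vz: "valid d Z z" and vz': "valid d Z z'"
  shows "extend W Sj P (cadd x z) (cadd y z') =
    P ((restr (Sj - {t}) x)(t := z t)) ((restr (Sj - {t}) y)(t := z' t)) *
    (if \<forall>l\<in>S - (Sj - {t}). x l = y l then 1 else 0) * (if \<forall>l\<in>Z - {t}. z l = z' l then 1 else 0)"
proof -
  have tnS: "t \<notin> S" using tZ dis by auto
  have r: "restr Sj (cadd a b) = (restr (Sj - {t}) a)(t := b t)" if va: "valid d S a" and vb: "valid d Z b" for a b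
  proof (rule ext)
    fix l
    show "restr Sj (cadd a b) l = ((restr (Sj - {t}) a)(t := b t)) l"
    proof (cases "l = t")
      case True then show ?thesis using tS tnS va by (simp add: restr_def cadd_def valid_out)
    next
      case False
      show ?thesis
      proof (cases "l \<in> Sj")
        case True
        then have "l \<in> S" "l \<notin> Z" using tS False dis by auto
        then show ?thesis using False True vb by (simp add: restr_def cadd_def valid_out)
      qed (use False in \<open>simp add: restr_def\<close>)
    qed
  qed
  have i: "(\<forall>l\<in>W - Sj. cadd x z l = cadd y z' l) \<longleftrightarrow>
      (\<forall>l\<in>S - (Sj - {t}). x l = y l) \<and> (\<forall>l\<in>Z - {t}. z l = z' l)"
  proof -
    have a: "(cadd x z l = cadd y z' l) = (x l = y l)" if "l \<in> S" for l
    proof -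
      have "l \<notin> Z" using that dis by auto
      then show ?thesis using cadd_S[OF vz, of l x] cadd_S[OF vz', of l y] by simp
    qed
    have b: "(cadd x z l = cadd y z' l) = (z l = z' l)" if "l \<in> Z" for l
    proof -
      have "l \<notin> S" using that dis by auto
      then show ?thesis using valid_out[OF vx, of l] valid_out[OF vy, of l] by (simp add: cadd_def)
    qed
    have "W - Sj = (S - (Sj - {t})) \<union> (Z - {t})" using W tS dis tZ by auto
    then have "(\<forall>l\<in>W - Sj. cadd x z l = cadd y z' l) \<longleftrightarrow>
       (\<forall>l\<in>S - (Sj - {t}). cadd x z l = cadd y z' l) \<and> (\<forall>l\<in>Z - {t}. cadd x z l = cadd y z' l)"
      by (simp only: ball_Un)
    also have "\<dots> \<longleftrightarrow> (\<forall>l\<in>S - (Sj - {t}). x l = y l) \<and> (\<forall>l\<in>Z - {t}. z l = z' l)"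
      using a b by (metis (no_types, lifting) DiffD1)
    finally show ?thesis .
  qed
  show ?thesis unfolding extend_def r[OF vx vz] r[OF vy vz'] i by simp
qed

lemma E_entry:
  "extend S (Sj - {t}) (ptrace d t P) x y =
   (\<Sum>k<d. P ((restr (Sj - {t}) x)(t := k)) ((restr (Sj - {t}) y)(t := k)) *
       (if \<forall>l\<in>S - (Sj - {t}). x l = y l then 1 else 0))"
  unfolding extend_def ptrace_def by (simp add: sum_distrib_right)

lemma ind3:
  assumes dt: "t1 \<noteq> t2" "t1 \<noteq> t3" "t2 \<noteq> t3" and Z: "Z = {t1,t2,t3}"
    and vz: "valid d Z z" and vz1: "valid d Z z1" and vz2: "valid d Z z2"
  shows "((\<forall>l\<in>Z - {t1}. z l = z1 l) \<and> (\<forall>l\<in>Z - {t2}. z1 l = z2 l) \<and> (\<forall>l\<in>Z - {t3}. z2 l = z l))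
     \<longleftrightarrow> z1 = z \<and> z2 = z"
proof
  assume h: "(\<forall>l\<in>Z - {t1}. z l = z1 l) \<and> (\<forall>l\<in>Z - {t2}. z1 l = z2 l) \<and> (\<forall>l\<in>Z - {t3}. z2 l = z l)"
  have a: "z1 t1 = z t1" "z1 t2 = z t2" "z1 t3 = z t3" "z2 t1 = z t1" "z2 t2 = z t2" "z2 t3 = z t3"
    using h dt Z by auto
  have "z1 = z" by (rule valid_eq[OF vz1 vz]) (use a Z in auto)
  moreover have "z2 = z" by (rule valid_eq[OF vz2 vz]) (use a Z in auto)
  ultimately show "z1 = z \<and> z2 = z" by simp
qed auto

lemma sum_Z3:
  assumes dt: "t1 \<noteq> t2" "t1 \<noteq> t3" "t2 \<noteq> t3"
  shows "(\<Sum>z\<in>cfgs d {t1,t2,t3}. h (z t1) (z t2) (z t3)) = (\<Sum>k1<d. \<Sum>k2<d. \<Sum>k3<d. h k1 k2 k3)"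
proof -
  have "(\<Sum>z\<in>cfgs d {t1,t2,t3}. h (z t1) (z t2) (z t3)) =
        (\<Sum>z\<in>cfgs d {t1,t2,t3}. (\<lambda>(k1,k2,k3). h k1 k2 k3) ((\<lambda>z. (z t1, z t2, z t3)) z))" by simp
  also have "\<dots> = (\<Sum>v\<in>idx3 d. (\<lambda>(k1,k2,k3). h k1 k2 k3) v)"
    by (rule sum.reindex_bij_betw[OF bij3[OF dt]])
  also have "idx3 d = {..<d} \<times> {..<d} \<times> {..<d}" by (auto simp: idx3_def)
  finally show ?thesis by (simp add: sum.cartesian_product)
qed



lemma sum3_prod:
  "(\<Sum>k1\<in>A. a k1) * (\<Sum>k2\<in>B. b k2) * (\<Sum>k3\<in>C. c k3) =
   (\<Sum>k1\<in>A. \<Sum>k2\<in>B. \<Sum>k3\<in>C. a k1 * b k2 * (c k3 :: complex))"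
proof -
  have "(\<Sum>k1\<in>A. a k1) * (\<Sum>k2\<in>B. b k2) * (\<Sum>k3\<in>C. c k3) =
        (\<Sum>k1\<in>A. a k1) * ((\<Sum>k2\<in>B. b k2) * (\<Sum>k3\<in>C. c k3))" by (rule mult.assoc)
  also have "(\<Sum>k2\<in>B. b k2) * (\<Sum>k3\<in>C. c k3) = (\<Sum>k2\<in>B. \<Sum>k3\<in>C. b k2 * c k3)" by (rule sum_product)
  also have "(\<Sum>k1\<in>A. a k1) * (\<Sum>k2\<in>B. \<Sum>k3\<in>C. b k2 * c k3) = (\<Sum>k1\<in>A. \<Sum>k2\<in>B. a k1 * (\<Sum>k3\<in>C. b k2 * c k3))"
    by (rule sum_product)
  also have "\<dots> = (\<Sum>k1\<in>A. \<Sum>k2\<in>B. \<Sum>k3\<in>C. a k1 * b k2 * c k3)"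
    by (simp add: sum_distrib_left mult.assoc)
  finally show ?thesis .
qed

lemma trace3:
  assumes fin: "finite S" "finite Z" and dt: "t1 \<noteq> t2" "t1 \<noteq> t3" "t2 \<noteq> t3"
    and Z: "Z = {t1,t2,t3}" and dis: "S \<inter> Z = {}" and W: "W = S \<union> Z"
    and S1: "t1 \<in> S1" "S1 - {t1} \<subseteq> S" and S2: "t2 \<in> S2" "S2 - {t2} \<subseteq> S"
    and S3: "t3 \<in> S3" "S3 - {t3} \<subseteq> S"
    and vu: "valid d S u" and vi: "valid d S i"
  shows "op_prod d S [extend S (S1 - {t1}) (ptrace d t1 P1), extend S (S2 - {t2}) (ptrace d t2 P2),
                      extend S (S3 - {t3}) (ptrace d t3 P3)] u i
       = trZ d Z (op_mult d W (extend W S1 P1) (op_mult d W (extend W S2 P2) (extend W S3 P3))) u i"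
proof -
  define I where "I = (\<lambda>A (x::cfg) (y::cfg). if \<forall>l\<in>A. x l = y l then 1 else (0::complex))"
  define p1 where "p1 = (\<lambda>x y k k'. P1 ((restr (S1-{t1}) x)(t1:=k)) ((restr (S1-{t1}) y)(t1:=k')) * I (S - (S1 - {t1})) x y)"
  define p2 where "p2 = (\<lambda>x y k k'. P2 ((restr (S2-{t2}) x)(t2:=k)) ((restr (S2-{t2}) y)(t2:=k')) * I (S - (S2 - {t2})) x y)"
  define p3 where "p3 = (\<lambda>x y k k'. P3 ((restr (S3-{t3}) x)(t3:=k)) ((restr (S3-{t3}) y)(t3:=k')) * I (S - (S3 - {t3})) x y)"
  let ?F1 = "extend W S1 P1" and ?F2 = "extend W S2 P2" and ?F3 = "extend W S3 P3"
  let ?E1 = "extend S (S1 - {t1}) (ptrace d t1 P1)" and ?E2 = "extend S (S2 - {t2}) (ptrace d t2 P2)"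
    and ?E3 = "extend S (S3 - {t3}) (ptrace d t3 P3)"
  have tZ: "t1 \<in> Z" "t2 \<in> Z" "t3 \<in> Z" using Z by auto
  have F1: "?F1 (cadd x z) (cadd y z') = p1 x y (z t1) (z' t1) * I (Z - {t1}) z z'"
    if "valid d S x" "valid d S y" "valid d Z z" "valid d Z z'" for x y z z'
    using F_entry[OF S1 tZ(1) dis W that, of P1] by (simp add: p1_def I_def)
  have F2: "?F2 (cadd x z) (cadd y z') = p2 x y (z t2) (z' t2) * I (Z - {t2}) z z'"
    if "valid d S x" "valid d S y" "valid d Z z" "valid d Z z'" for x y z z'
    using F_entry[OF S2 tZ(2) dis W that, of P2] by (simp add: p2_def I_def)
  have F3: "?F3 (cadd x z) (cadd y z') = p3 x y (z t3) (z' t3) * I (Z - {t3}) z z'"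
    if "valid d S x" "valid d S y" "valid d Z z" "valid d Z z'" for x y z z'
    using F_entry[OF S3 tZ(3) dis W that, of P3] by (simp add: p3_def I_def)
  have E1: "?E1 x y = (\<Sum>k<d. p1 x y k k)" for x y by (simp add: E_entry p1_def I_def)
  have E2: "?E2 x y = (\<Sum>k<d. p2 x y k k)" for x y by (simp add: E_entry p2_def I_def)
  have E3: "?E3 x y = (\<Sum>k<d. p3 x y k k)" for x y by (simp add: E_entry p3_def I_def)
  have splitW: "sum f (cfgs d W) = (\<Sum>a\<in>cfgs d S. \<Sum>b\<in>cfgs d Z. f (cadd a b))" for f
    using W cfgs_split[OF dis] by simp
  have L: "op_prod d S [?E1, ?E2, ?E3] u i =
     (\<Sum>e1\<in>cfgs d S. \<Sum>e2\<in>cfgs d S. \<Sum>k1<d. \<Sum>k2<d. \<Sum>k3<d. p1 u e1 k1 k1 * p2 e1 e2 k2 k2 * p3 e2 i k3 k3)"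
  proof -
    have "op_prod d S [?E1, ?E2, ?E3] u i =
        (\<Sum>e1\<in>cfgs d S. ?E1 u e1 * (\<Sum>e2\<in>cfgs d S. ?E2 e1 e2 * op_mult d S ?E3 op_id e2 i))"
      by (simp add: op_prod_def op_mult_def[of d S ?E1] op_mult_def[of d S ?E2])
    also have "\<dots> = (\<Sum>e1\<in>cfgs d S. ?E1 u e1 * (\<Sum>e2\<in>cfgs d S. ?E2 e1 e2 * ?E3 e2 i))"
      by (simp add: op_mult_id_r[OF fin(1) vi])
    also have "\<dots> = (\<Sum>e1\<in>cfgs d S. \<Sum>e2\<in>cfgs d S. ?E1 u e1 * (?E2 e1 e2 * ?E3 e2 i))"
      by (simp only: sum_distrib_left)
    also have "\<dots> = (\<Sum>e1\<in>cfgs d S. \<Sum>e2\<in>cfgs d S. (\<Sum>k<d. p1 u e1 k k) * (\<Sum>k<d. p2 e1 e2 k k) * (\<Sum>k<d. p3 e2 i k k))"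
      by (simp only: E1 E2 E3 mult.assoc)
    also have "\<dots> = (\<Sum>e1\<in>cfgs d S. \<Sum>e2\<in>cfgs d S. \<Sum>k1<d. \<Sum>k2<d. \<Sum>k3<d. p1 u e1 k1 k1 * p2 e1 e2 k2 k2 * p3 e2 i k3 k3)"
      by (simp only: sum3_prod)
    finally show ?thesis .
  qed
  have G: "op_mult d W ?F1 (op_mult d W ?F2 ?F3) (cadd u z) (cadd i z) =
     (\<Sum>e1\<in>cfgs d S. \<Sum>e2\<in>cfgs d S. p1 u e1 (z t1) (z t1) * p2 e1 e2 (z t2) (z t2) * p3 e2 i (z t3) (z t3))"
    if vz: "valid d Z z" for z
  proof -
    define X where "X = (\<lambda>e1 z1 e2 z2. p1 u e1 (z t1) (z1 t1) * I (Z - {t1}) z z1 *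
        (p2 e1 e2 (z1 t2) (z2 t2) * I (Z - {t2}) z1 z2 * (p3 e2 i (z2 t3) (z t3) * I (Z - {t3}) z2 z)))"
    have inner: "op_mult d W ?F2 ?F3 (cadd x z1) (cadd i z) =
       (\<Sum>e2\<in>cfgs d S. \<Sum>z2\<in>cfgs d Z. p2 x e2 (z1 t2) (z2 t2) * I (Z - {t2}) z1 z2 *
          (p3 e2 i (z2 t3) (z t3) * I (Z - {t3}) z2 z))"
      if vx: "valid d S x" and vz1: "valid d Z z1" for x z1
      unfolding op_mult_def splitW
      by (intro sum.cong refl) (simp add: cfgs_iff F2[OF vx _ vz1] F3[OF _ vi _ vz])
    have "op_mult d W ?F1 (op_mult d W ?F2 ?F3) (cadd u z) (cadd i z) =
       (\<Sum>e1\<in>cfgs d S. \<Sum>z1\<in>cfgs d Z. ?F1 (cadd u z) (cadd e1 z1) * op_mult d W ?F2 ?F3 (cadd e1 z1) (cadd i z))"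
      by (simp only: op_mult_def[of d W ?F1] splitW)
    also have "\<dots> = (\<Sum>e1\<in>cfgs d S. \<Sum>z1\<in>cfgs d Z. \<Sum>e2\<in>cfgs d S. \<Sum>z2\<in>cfgs d Z. X e1 z1 e2 z2)"
      by (intro sum.cong refl) (simp add: cfgs_iff F1[OF vu _ vz] inner X_def sum_distrib_left)
    also have "\<dots> = (\<Sum>e1\<in>cfgs d S. \<Sum>e2\<in>cfgs d S. \<Sum>z1\<in>cfgs d Z. \<Sum>z2\<in>cfgs d Z. X e1 z1 e2 z2)"
      by (intro sum.cong refl sum.swap)
    also have "\<dots> = (\<Sum>e1\<in>cfgs d S. \<Sum>e2\<in>cfgs d S. p1 u e1 (z t1) (z t1) * p2 e1 e2 (z t2) (z t2) * p3 e2 i (z t3) (z t3))"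
    proof (intro sum.cong refl)
      fix e1 e2
      let ?V = "p1 u e1 (z t1) (z t1) * p2 e1 e2 (z t2) (z t2) * p3 e2 i (z t3) (z t3)"
      have "(\<Sum>z1\<in>cfgs d Z. \<Sum>z2\<in>cfgs d Z. X e1 z1 e2 z2) =
            (\<Sum>z1\<in>cfgs d Z. \<Sum>z2\<in>cfgs d Z. if z1 = z then (if z2 = z then ?V else 0) else 0)"
      proof (intro sum.cong refl)
        fix z1 z2 assume "z1 \<in> cfgs d Z" "z2 \<in> cfgs d Z"
        then have vz1: "valid d Z z1" and vz2: "valid d Z z2" by (auto simp: cfgs_iff)
        have "I (Z - {t1}) z z1 * I (Z - {t2}) z1 z2 * I (Z - {t3}) z2 z = (if z1 = z \<and> z2 = z then 1 else 0)"
          unfolding I_def ind3[OF dt Z vz vz1 vz2, symmetric] by simp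
        moreover have "X e1 z1 e2 z2 = (p1 u e1 (z t1) (z1 t1) * p2 e1 e2 (z1 t2) (z2 t2) * p3 e2 i (z2 t3) (z t3)) *
            (I (Z - {t1}) z z1 * I (Z - {t2}) z1 z2 * I (Z - {t3}) z2 z)"
          unfolding X_def by (simp only: mult_ac)
        ultimately show "X e1 z1 e2 z2 = (if z1 = z then (if z2 = z then ?V else 0) else 0)"
          by (cases "z1 = z"; cases "z2 = z") simp_all
      qed
      also have "\<dots> = (\<Sum>z1\<in>cfgs d Z. if z1 = z then (\<Sum>z2\<in>cfgs d Z. if z2 = z then ?V else 0) else 0)"
        by (intro sum.cong refl) simp
      also have "\<dots> = ?V" using fin(2) vz by (simp add: finite_cfgs cfgs_iff)
      finally show "(\<Sum>z1\<in>cfgs d Z. \<Sum>z2\<in>cfgs d Z. X e1 z1 e2 z2) = ?V" .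
    qed
    finally show ?thesis .
  qed
  have "trZ d Z (op_mult d W ?F1 (op_mult d W ?F2 ?F3)) u i =
     (\<Sum>z\<in>cfgs d Z. \<Sum>e1\<in>cfgs d S. \<Sum>e2\<in>cfgs d S. p1 u e1 (z t1) (z t1) * p2 e1 e2 (z t2) (z t2) * p3 e2 i (z t3) (z t3))"
    unfolding trZ_def by (intro sum.cong refl) (simp add: G cfgs_iff)
  also have "\<dots> = (\<Sum>e1\<in>cfgs d S. \<Sum>e2\<in>cfgs d S. \<Sum>z\<in>cfgs d Z. p1 u e1 (z t1) (z t1) * p2 e1 e2 (z t2) (z t2) * p3 e2 i (z t3) (z t3))"
    by (subst sum.swap) (intro sum.cong refl sum.swap)
  also have "\<dots> = (\<Sum>e1\<in>cfgs d S. \<Sum>e2\<in>cfgs d S. \<Sum>k1<d. \<Sum>k2<d. \<Sum>k3<d. p1 u e1 k1 k1 * p2 e1 e2 k2 k2 * p3 e2 i k3 k3)"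
    unfolding Z by (intro sum.cong refl sum_Z3[OF dt])
  finally show ?thesis using L by simp
qed



locale amon =
  fixes M :: "'a \<Rightarrow> 'a \<Rightarrow> 'a" and e :: 'a and N :: "'a set"
  assumes assoc: "M (M x y) z = M x (M y z)"
    and closed: "M x y \<in> N" and e_in: "e \<in> N"
    and lunit: "x \<in> N \<Longrightarrow> M e x = x" and runit: "x \<in> N \<Longrightarrow> M x e = x"
begin

definition prd where "prd xs = foldr M xs e"

lemma prd_in: "prd xs \<in> N"
  by (cases xs) (auto simp: prd_def closed e_in)

lemma prd_Nil[simp]: "prd [] = e" by (simp add: prd_def)

lemma prd_Cons: "prd (x # xs) = M x (prd xs)" by (simp add: prd_def)

lemma prd_append: "prd (xs @ ys) = M (prd xs) (prd ys)"
  by (induction xs) (auto simp: prd_def lunit prd_in[unfolded prd_def] assoc)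

lemma prd_single: "x \<in> N \<Longrightarrow> prd [x] = x"
  by (simp add: prd_def runit)

lemma comm_prd:
  assumes "x \<in> N" "\<forall>y\<in>set ys. M y x = M x y"
  shows "M (prd ys) x = M x (prd ys)"
  using assms(2)
proof (induction ys)
  case Nil then show ?case using assms(1) by (simp add: lunit runit)
next
  case (Cons y ys)
  have "M (prd (y # ys)) x = M y (M (prd ys) x)" by (simp add: prd_Cons assoc)
  also have "\<dots> = M y (M x (prd ys))" using Cons by simp
  also have "\<dots> = M (M y x) (prd ys)" by (simp add: assoc)
  also have "\<dots> = M (M x y) (prd ys)" using Cons by simp
  finally show ?case by (simp add: prd_Cons assoc)
qed

lemma lcomm: "M x y = M y x \<Longrightarrow> M x (M y z) = M y (M x z)"
  by (metis assoc)

lemma reorder: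
  assumes mem: "\<forall>l. a l \<in> N \<and> b l \<in> N \<and> c l \<in> N"
    and comm: "\<forall>l m. m < l \<longrightarrow> l < n \<longrightarrow> M (b m) (a l) = M (a l) (b m) \<and> M (c m) (a l) = M (a l) (c m)
                  \<and> M (c m) (b l) = M (b l) (c m)"
  shows "prd (map (\<lambda>l. M (a l) (M (b l) (c l))) [0..<n]) =
         M (prd (map a [0..<n])) (M (prd (map b [0..<n])) (prd (map c [0..<n])))"
  using comm
proof (induction n)
  case 0 then show ?case using e_in by (simp add: lunit)
next
  case (Suc n)
  let ?PA = "prd (map a [0..<n])" and ?PB = "prd (map b [0..<n])" and ?PC = "prd (map c [0..<n])"
  have IH: "prd (map (\<lambda>l. M (a l) (M (b l) (c l))) [0..<n]) = M ?PA (M ?PB ?PC)"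
    using Suc by auto
  have c1: "M ?PC (a n) = M (a n) ?PC"
    by (rule comm_prd) (use mem Suc.prems in auto)
  have c2: "M ?PB (a n) = M (a n) ?PB"
    by (rule comm_prd) (use mem Suc.prems in auto)
  have c3: "M ?PC (b n) = M (b n) ?PC"
    by (rule comm_prd) (use mem Suc.prems in auto)
  have "prd (map (\<lambda>l. M (a l) (M (b l) (c l))) [0..<Suc n]) =
        M (M ?PA (M ?PB ?PC)) (M (a n) (M (b n) (c n)))"
    by (simp add: prd_append IH prd_single closed)
  also have "\<dots> = M ?PA (M (a n) (M ?PB (M (b n) (M ?PC (c n)))))"
    by (simp only: assoc lcomm[OF c1] lcomm[OF c2] lcomm[OF c3])
  also have "\<dots> = M (prd (map a [0..<Suc n])) (M (prd (map b [0..<Suc n])) (prd (map c [0..<Suc n])))"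
    using mem by (simp add: prd_append prd_single assoc)
  finally show ?case .
qed

lemma tele:
  assumes "m \<le> n" and h: "\<forall>j. m \<le> j \<and> j < n \<longrightarrow> M (f j) (q (Suc j)) = M (q j) (g j)"
    and mem: "\<forall>j. q j \<in> N \<and> f j \<in> N \<and> g j \<in> N"
  shows "M (prd (map f [m..<n])) (q n) = M (q m) (prd (map g [m..<n]))"
  using assms(1) h
proof (induction n)
  case 0 then show ?case using mem by (simp add: lunit runit)
next
  case (Suc n)
  show ?case
  proof (cases "m = Suc n")
    case True then show ?thesis using mem by (simp add: lunit runit)
  next
    case False
    then have mn: "m \<le> n" using Suc.prems by auto
    have IH: "M (prd (map f [m..<n])) (q n) = M (q m) (prd (map g [m..<n]))"
      using Suc mn by auto
    have "M (prd (map f [m..<Suc n])) (q (Suc n)) = M (prd (map f [m..<n])) (M (f n) (q (Suc n)))"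
      using mn mem by (simp add: prd_append prd_single assoc)
    also have "\<dots> = M (prd (map f [m..<n])) (M (q n) (g n))" using Suc.prems mn by simp
    also have "\<dots> = M (M (q m) (prd (map g [m..<n]))) (g n)" by (simp add: IH flip: assoc)
    also have "\<dots> = M (q m) (prd (map g [m..<Suc n]))"
      using mn mem by (simp add: prd_append prd_single assoc)
    finally show ?thesis .
  qed
qed

end

lemma Xop_ext:
  assumes "{(\<alpha>,\<beta>),(\<alpha>,\<gamma>),(\<beta>,\<gamma>)} \<subseteq> T" "T \<subseteq> W"
  shows "Xop W r X \<tau> \<alpha> \<beta> \<gamma> = extend W T (Xop T r X \<tau> \<alpha> \<beta> \<gamma>)"
  unfolding Xop_def by (rule loc_ext[OF assms])

lemma chain_ext:
  assumes fin: "finite W" "finite (set ps)" and TW: "tr_space ps \<alpha> \<beta> \<subseteq> W"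
  shows "nrm d W (extend W (tr_space ps \<alpha> \<beta>) (op_prod d (tr_space ps \<alpha> \<beta>)
            (map (\<lambda>l. Xop (tr_space ps \<alpha> \<beta>) r X (col \<tau> (Suc l)) (ps!l) \<alpha> \<beta>) [0..<length ps])))
       = nrm d W (op_prod d W (map (\<lambda>l. Xop W r X (col \<tau> (Suc l)) (ps!l) \<alpha> \<beta>) [0..<length ps]))"
proof -
  let ?T = "tr_space ps \<alpha> \<beta>"
  have fT: "finite ?T" using fin by (simp add: tr_space_def)
  have mq: "map (\<lambda>l. Xop W r X (col \<tau> (Suc l)) (ps!l) \<alpha> \<beta>) [0..<length ps] =
        map (extend W ?T) (map (\<lambda>l. Xop ?T r X (col \<tau> (Suc l)) (ps!l) \<alpha> \<beta>) [0..<length ps])"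
    unfolding map_map o_def
  proof (intro map_cong refl)
    fix l assume "l \<in> set [0..<length ps]"
    then have "ps ! l \<in> set ps" by simp
    then have "{(ps!l,\<alpha>),(ps!l,\<beta>),(\<alpha>,\<beta>)} \<subseteq> ?T" by (auto simp: tr_space_def)
    then show "Xop W r X (col \<tau> (Suc l)) (ps!l) \<alpha> \<beta> = extend W ?T (Xop ?T r X (col \<tau> (Suc l)) (ps!l) \<alpha> \<beta>)"
      by (rule Xop_ext[OF _ TW])
  qed
  show ?thesis unfolding mq by (rule ext_prod[OF fin(1) fT TW, symmetric])
qed

lemma bte_lift:
  assumes bte: "BTE d R R1 R2 R3 \<tau>" and ord: "p < b" "b < c" "c < e"
    and fin: "finite W" and SW: "six_space p b c e \<subseteq> W"
  shows "nrm d W (op_prod d W [Xop W r R \<tau> p b c, Xop W r R1 (col \<tau> 1) p b e,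
                               Xop W r R2 \<tau> p c e, Xop W r R3 (col \<tau> 1) b c e]) =
         nrm d W (op_prod d W [Xop W r R3 \<tau> b c e, Xop W r R2 (col \<tau> 1) p c e,
                               Xop W r R1 \<tau> p b e, Xop W r R (col \<tau> 1) p b c])"
proof -
  let ?S = "six_space p b c e"
  have fS: "finite ?S" by (simp add: six_space_def)
  have eq: "op_eq d ?S
           (op_prod d ?S [Xop ?S r R \<tau> p b c, Xop ?S r R1 (col \<tau> 1) p b e,
                         Xop ?S r R2 \<tau> p c e, Xop ?S r R3 (col \<tau> 1) b c e])
           (op_prod d ?S [Xop ?S r R3 \<tau> b c e, Xop ?S r R2 (col \<tau> 1) p c e,
                         Xop ?S r R1 \<tau> p b e, Xop ?S r R (col \<tau> 1) p b c])"
    using bte ord unfolding BTE_def Let_def by blast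
  have x: "Xop W r X t a1 a2 a3 = extend W ?S (Xop ?S r X t a1 a2 a3)"
    if "{(a1,a2),(a1,a3),(a2,a3)} \<subseteq> ?S" for X t a1 a2 a3
    by (rule Xop_ext[OF that SW])
  have s: "{(p,b),(p,c),(b,c)} \<subseteq> ?S" "{(p,b),(p,e),(b,e)} \<subseteq> ?S" "{(p,c),(p,e),(c,e)} \<subseteq> ?S"
          "{(b,c),(b,e),(c,e)} \<subseteq> ?S" by (auto simp: six_space_def)
  have l1: "[Xop W r R \<tau> p b c, Xop W r R1 (col \<tau> 1) p b e, Xop W r R2 \<tau> p c e, Xop W r R3 (col \<tau> 1) b c e]
     = map (extend W ?S) [Xop ?S r R \<tau> p b c, Xop ?S r R1 (col \<tau> 1) p b e,
                         Xop ?S r R2 \<tau> p c e, Xop ?S r R3 (col \<tau> 1) b c e]"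
    using x[OF s(1)] x[OF s(2)] x[OF s(3)] x[OF s(4)] by simp
  have l2: "[Xop W r R3 \<tau> b c e, Xop W r R2 (col \<tau> 1) p c e, Xop W r R1 \<tau> p b e, Xop W r R (col \<tau> 1) p b c]
     = map (extend W ?S) [Xop ?S r R3 \<tau> b c e, Xop ?S r R2 (col \<tau> 1) p c e,
                         Xop ?S r R1 \<tau> p b e, Xop ?S r R (col \<tau> 1) p b c]"
    using x[OF s(1)] x[OF s(2)] x[OF s(3)] x[OF s(4)] by simp
  show ?thesis
    unfolding l1 l2 ext_prod[OF fin fS SW] by (rule ext_opeq[OF SW eq])
qed

lemma Xop_comm:
  assumes fin: "finite W"
    and A: "{(a1,a2),(a1,a3),(a2,a3)} \<subseteq> W" and B: "{(b1,b2),(b1,b3),(b2,b3)} \<subseteq> W"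
    and dis: "{(a1,a2),(a1,a3),(a2,a3)} \<inter> {(b1,b2),(b1,b3),(b2,b3)} = {}"
  shows "mm d W (Xop W r X t a1 a2 a3) (Xop W r Y t' b1 b2 b3) = mm d W (Xop W r Y t' b1 b2 b3) (Xop W r X t a1 a2 a3)"
  unfolding Xop_ext[OF subset_refl A] Xop_ext[OF subset_refl B]
  by (rule ext_comm[OF fin A B dis])



lemma nrm3: "nrm d W (op_mult d W F1 (op_mult d W F2 F3)) = mm d W (nrm d W F1) (mm d W (nrm d W F2) (nrm d W F3))"
proof -
  have "mm d W (nrm d W F1) (mm d W (nrm d W F2) (nrm d W F3)) = mm d W F1 (nrm d W (op_mult d W F2 F3))"
    by (simp add: mm_def[of d W F2 F3])
  also have "\<dots> = mm d W F1 (op_mult d W F2 F3)" by (rule mm_nrm_r)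
  also have "\<dots> = nrm d W (op_mult d W F1 (op_mult d W F2 F3))" by (simp only: mm_def)
  finally show ?thesis by simp
qed

lemma side:
  assumes finS: "finite S" and finZ: "finite Z" and finps: "finite (set ps)"
    and dt: "(\<alpha>1,\<beta>1) \<noteq> (\<alpha>2,\<beta>2)" "(\<alpha>1,\<beta>1) \<noteq> (\<alpha>3,\<beta>3)" "(\<alpha>2,\<beta>2) \<noteq> (\<alpha>3,\<beta>3)"
    and Z: "Z = {(\<alpha>1,\<beta>1),(\<alpha>2,\<beta>2),(\<alpha>3,\<beta>3)}" and dis: "S \<inter> Z = {}" and W: "W = S \<union> Z"
    and T1: "tr_space ps \<alpha>1 \<beta>1 - {(\<alpha>1,\<beta>1)} \<subseteq> S"
    and T2: "tr_space ps \<alpha>2 \<beta>2 - {(\<alpha>2,\<beta>2)} \<subseteq> S"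
    and T3: "tr_space ps \<alpha>3 \<beta>3 - {(\<alpha>3,\<beta>3)} \<subseteq> S"
    and vu: "valid d S u" and vi: "valid d S i"
  shows "op_prod d S [trace_red d S ps r X1 \<tau>1 \<alpha>1 \<beta>1, trace_red d S ps r X2 \<tau>2 \<alpha>2 \<beta>2,
                      trace_red d S ps r X3 \<tau>3 \<alpha>3 \<beta>3] u i =
    trZ d Z (mm d W (nrm d W (op_prod d W (map (\<lambda>l. Xop W r X1 (col \<tau>1 (Suc l)) (ps!l) \<alpha>1 \<beta>1) [0..<length ps])))
             (mm d W (nrm d W (op_prod d W (map (\<lambda>l. Xop W r X2 (col \<tau>2 (Suc l)) (ps!l) \<alpha>2 \<beta>2) [0..<length ps])))
                     (nrm d W (op_prod d W (map (\<lambda>l. Xop W r X3 (col \<tau>3 (Suc l)) (ps!l) \<alpha>3 \<beta>3) [0..<length ps]))))) u i"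
proof -
  let ?S1 = "tr_space ps \<alpha>1 \<beta>1" and ?S2 = "tr_space ps \<alpha>2 \<beta>2" and ?S3 = "tr_space ps \<alpha>3 \<beta>3"
  let ?P1 = "op_prod d ?S1 (map (\<lambda>l. Xop ?S1 r X1 (col \<tau>1 (Suc l)) (ps!l) \<alpha>1 \<beta>1) [0..<length ps])"
  let ?P2 = "op_prod d ?S2 (map (\<lambda>l. Xop ?S2 r X2 (col \<tau>2 (Suc l)) (ps!l) \<alpha>2 \<beta>2) [0..<length ps])"
  let ?P3 = "op_prod d ?S3 (map (\<lambda>l. Xop ?S3 r X3 (col \<tau>3 (Suc l)) (ps!l) \<alpha>3 \<beta>3) [0..<length ps])"
  have in1: "(\<alpha>1,\<beta>1) \<in> ?S1" "(\<alpha>2,\<beta>2) \<in> ?S2" "(\<alpha>3,\<beta>3) \<in> ?S3" by (auto simp: tr_space_def)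
  have sw: "?S1 \<subseteq> W" "?S2 \<subseteq> W" "?S3 \<subseteq> W" using T1 T2 T3 Z W by auto
  have finW: "finite W" using finS finZ W by simp
  have "op_prod d S [trace_red d S ps r X1 \<tau>1 \<alpha>1 \<beta>1, trace_red d S ps r X2 \<tau>2 \<alpha>2 \<beta>2,
                      trace_red d S ps r X3 \<tau>3 \<alpha>3 \<beta>3] u i =
        op_prod d S [extend S (?S1 - {(\<alpha>1,\<beta>1)}) (ptrace d (\<alpha>1,\<beta>1) ?P1),
                     extend S (?S2 - {(\<alpha>2,\<beta>2)}) (ptrace d (\<alpha>2,\<beta>2) ?P2),
                     extend S (?S3 - {(\<alpha>3,\<beta>3)}) (ptrace d (\<alpha>3,\<beta>3) ?P3)] u i"
    by (simp add: trace_red_def Let_def)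
  also have "\<dots> = trZ d Z (op_mult d W (extend W ?S1 ?P1) (op_mult d W (extend W ?S2 ?P2) (extend W ?S3 ?P3))) u i"
    by (rule trace3[OF finS finZ dt Z dis W in1(1) T1 in1(2) T2 in1(3) T3 vu vi])
  also have "\<dots> = trZ d Z (nrm d W (op_mult d W (extend W ?S1 ?P1) (op_mult d W (extend W ?S2 ?P2) (extend W ?S3 ?P3)))) u i"
    by (rule trZ_nrm[symmetric, OF dis W vu vi])
  also have "\<dots> = trZ d Z (mm d W (nrm d W (extend W ?S1 ?P1)) (mm d W (nrm d W (extend W ?S2 ?P2)) (nrm d W (extend W ?S3 ?P3)))) u i"
    by (simp only: nrm3)
  finally show ?thesis
    by (simp only: chain_ext[OF finW finps sw(1)] chain_ext[OF finW finps sw(2)] chain_ext[OF finW finps sw(3)])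
qed

lemma comm_gen:
  assumes W: "W = yb_space ps b c e \<union> {(b,c),(b,e),(c,e)}" and fin: "finite W"
    and below: "\<forall>p \<in> set ps. p < b" and bc: "b < c" and ce: "c < e"
    and pl: "pl \<in> set ps" and pm: "pm \<in> set ps" and plm: "pl \<noteq> pm"
    and a: "(a2,a3) \<in> {(b,c),(b,e),(c,e)}" and b': "(b2,b3) \<in> {(b,c),(b,e),(c,e)}" and ab: "(a2,a3) \<noteq> (b2,b3)"
  shows "mm d W (nrm d W (Xop W r X t pl a2 a3)) (nrm d W (Xop W r Y t' pm b2 b3)) =
         mm d W (nrm d W (Xop W r Y t' pm b2 b3)) (nrm d W (Xop W r X t pl a2 a3))"
proof -
  have l: "pl < b" "pm < b" using below pl pm by auto
  have A: "{(pl,a2),(pl,a3),(a2,a3)} \<subseteq> W" using a pl W by (auto simp: yb_space_def)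
  have B: "{(pm,b2),(pm,b3),(b2,b3)} \<subseteq> W" using b' pm W by (auto simp: yb_space_def)
  have dis: "{(pl,a2),(pl,a3),(a2,a3)} \<inter> {(pm,b2),(pm,b3),(b2,b3)} = {}"
    using a b' ab plm l bc ce by auto
  show ?thesis using Xop_comm[OF fin A B dis] by simp
qed



lemma col_simps: "col (col \<sigma> k) 1 = col \<sigma> (Suc k)" "col (col \<sigma> 1) k = col \<sigma> (Suc k)"
  "col (col \<sigma> k) (Suc 0) = col \<sigma> (Suc k)" "col (col \<sigma> (Suc 0)) k = col \<sigma> (Suc k)"
  by (auto simp: col_def)

theorem mainTheorem1:
  fixes d :: nat
    and R R1 R2 R3 :: "bool \<Rightarrow> 'c \<Rightarrow> 'c \<Rightarrow> 'c \<Rightarrow> mat3"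
    and L :: nat and ps :: "nat list" and r :: "nat \<Rightarrow> 'c"
    and b c e :: nat and \<sigma> :: bool
  assumes bte: "\<And>\<tau>. BTE d R R1 R2 R3 \<tau>"
    and inv: "\<And>\<tau> x y z. invertible3 d (R3 \<tau> x y z)"
    and L: "L \<ge> 1" and len: "length ps = 2 * L"
    and sorted: "sorted_wrt (<) ps"
    and below: "\<forall>p \<in> set ps. p < b"
    and bc: "b < c" and ce: "c < e"
  shows "let S = yb_space ps b c e in
    op_eq d S
      (op_prod d S [trace_red d S ps r R \<sigma> b c, trace_red d S ps r R1 (col \<sigma> 1) b e,
                    trace_red d S ps r R2 \<sigma> c e])
      (op_prod d S [trace_red d S ps r R2 (col \<sigma> 1) c e, trace_red d S ps r R1 \<sigma> b e,
                    trace_red d S ps r R (col \<sigma> 1) b c])"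
proof -
  define n where "n = length ps"
  define S where "S = yb_space ps b c e"
  define Z where "Z = ({(b,c),(b,e),(c,e)} :: label set)"
  define W where "W = S \<union> Z"
  have finps: "finite (set ps)" by simp
  have finS: "finite S" by (simp add: S_def yb_space_def)
  have finZ: "finite Z" by (simp add: Z_def)
  have finW: "finite W" using finS finZ by (simp add: W_def)
  have dis: "S \<inter> Z = {}" using below bc ce by (auto simp: S_def Z_def yb_space_def)
  have dt: "(b,c) \<noteq> (b,e)" "(b,c) \<noteq> (c,e)" "(b,e) \<noteq> (c,e)" using bc ce by auto
  have dt': "(c,e) \<noteq> (b,e)" "(c,e) \<noteq> (b,c)" "(b,e) \<noteq> (b,c)" using bc ce by auto
  have Z': "Z = {(c,e),(b,e),(b,c)}" by (auto simp: Z_def)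
  have T: "tr_space ps b c - {(b,c)} \<subseteq> S" "tr_space ps b e - {(b,e)} \<subseteq> S" "tr_space ps c e - {(c,e)} \<subseteq> S"
    by (auto simp: tr_space_def S_def yb_space_def)
  have Wdef: "W = yb_space ps b c e \<union> {(b,c),(b,e),(c,e)}" by (simp add: W_def S_def Z_def)
  have nth_in: "ps ! l \<in> set ps" if "l < n" for l using that by (simp add: n_def)
  have dist: "ps ! m \<noteq> ps ! l" if "m < l" "l < n" for l m
    using sorted_wrt_nth_less[OF sorted that(1)] that by (simp add: n_def)
  have neven: "even n" using len by (simp add: n_def)
  interpret m: amon "mm d W" "nrm d W op_id" "range (nrm d W)"
  proof
    show "mm d W (mm d W x y) z = mm d W x (mm d W y z)" for x y z by (rule mm_assoc)
    show "mm d W x y \<in> range (nrm d W)" for x y by (metis mm_def rangeI)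
    show "nrm d W op_id \<in> range (nrm d W)" by simp
    show "x \<in> range (nrm d W) \<Longrightarrow> mm d W (nrm d W op_id) x = x" for x
      using mm_one_l[OF finW] by auto
    show "x \<in> range (nrm d W) \<Longrightarrow> mm d W x (nrm d W op_id) = x" for x
      using mm_one_r[OF finW] by auto
  qed
  let ?M = "mm d W" and ?e = "nrm d W op_id"
  have prod_nrm: "nrm d W (op_prod d W Fs) = m.prd (map (nrm d W) Fs)" for Fs
    by (simp add: op_prod_nrm m.prd_def)
  define A where "A = (\<lambda>l. nrm d W (Xop W r R (col \<sigma> (Suc l)) (ps!l) b c))"
  define B where "B = (\<lambda>l. nrm d W (Xop W r R1 (col (col \<sigma> 1) (Suc l)) (ps!l) b e))"
  define C where "C = (\<lambda>l. nrm d W (Xop W r R2 (col \<sigma> (Suc l)) (ps!l) c e))"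
  define A' where "A' = (\<lambda>l. nrm d W (Xop W r R (col (col \<sigma> 1) (Suc l)) (ps!l) b c))"
  define B' where "B' = (\<lambda>l. nrm d W (Xop W r R1 (col \<sigma> (Suc l)) (ps!l) b e))"
  define C' where "C' = (\<lambda>l. nrm d W (Xop W r R2 (col (col \<sigma> 1) (Suc l)) (ps!l) c e))"
  define q where "q = (\<lambda>j. nrm d W (Xop W r R3 (col \<sigma> (Suc j)) b c e))"
  define Tf where "Tf = (\<lambda>l. ?M (A l) (?M (B l) (C l)))"
  define Tg where "Tg = (\<lambda>l. ?M (C' l) (?M (B' l) (A' l)))"
  have memN: "\<forall>l. A l \<in> range (nrm d W) \<and> B l \<in> range (nrm d W) \<and> C l \<in> range (nrm d W) \<and>
      A' l \<in> range (nrm d W) \<and> B' l \<in> range (nrm d W) \<and> C' l \<in> range (nrm d W) \<and> q l \<in> range (nrm d W)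
      \<and> Tf l \<in> range (nrm d W) \<and> Tg l \<in> range (nrm d W)"
    by (auto simp: A_def B_def C_def A'_def B'_def C'_def q_def Tf_def Tg_def m.closed)
  have cg: "?M (nrm d W (Xop W r X t (ps!l) a2 a3)) (nrm d W (Xop W r Y t' (ps!m) b2 b3)) =
            ?M (nrm d W (Xop W r Y t' (ps!m) b2 b3)) (nrm d W (Xop W r X t (ps!l) a2 a3))"
    if "m < l" "l < n" "(a2,a3) \<in> {(b,c),(b,e),(c,e)}" "(b2,b3) \<in> {(b,c),(b,e),(c,e)}" "(a2,a3) \<noteq> (b2,b3)"
    for X Y t t' l m a2 a3 b2 b3
    by (rule comm_gen[OF Wdef finW below bc ce nth_in[OF that(2)] nth_in dist[OF that(1,2), symmetric] that(3,4,5)])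
      (use that in auto)
  have cg': "?M (Xop W r Y t' (ps!m) b2 b3) (Xop W r X t (ps!l) a2 a3) =
            ?M (Xop W r X t (ps!l) a2 a3) (Xop W r Y t' (ps!m) b2 b3)"
    if "m < l" "l < n" "(a2,a3) \<in> {(b,c),(b,e),(c,e)}" "(b2,b3) \<in> {(b,c),(b,e),(c,e)}" "(a2,a3) \<noteq> (b2,b3)"
    for X Y t t' l m a2 a3 b2 b3
    using cg[OF that] by simp
  have LHS: "op_prod d S [trace_red d S ps r R \<sigma> b c, trace_red d S ps r R1 (col \<sigma> 1) b e,
                    trace_red d S ps r R2 \<sigma> c e] u i =
      trZ d Z (?M (m.prd (map A [0..<n])) (?M (m.prd (map B [0..<n])) (m.prd (map C [0..<n])))) u i"
    if vu: "valid d S u" and vi: "valid d S i" for u i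
    using side[OF finS finZ finps dt Z_def dis W_def T vu vi, of r R \<sigma> R1 "col \<sigma> 1" R2 \<sigma>]
    by (simp add: prod_nrm n_def A_def B_def C_def o_def)
  have RHS: "op_prod d S [trace_red d S ps r R2 (col \<sigma> 1) c e, trace_red d S ps r R1 \<sigma> b e,
                    trace_red d S ps r R (col \<sigma> 1) b c] u i =
      trZ d Z (?M (m.prd (map C' [0..<n])) (?M (m.prd (map B' [0..<n])) (m.prd (map A' [0..<n])))) u i"
    if vu: "valid d S u" and vi: "valid d S i" for u i
    using side[OF finS finZ finps dt' Z' dis W_def T(3) T(2) T(1) vu vi, of r R2 "col \<sigma> 1" R1 \<sigma> R "col \<sigma> 1"]
    by (simp add: prod_nrm n_def A'_def B'_def C'_def o_def)
  have reoL: "m.prd (map Tf [0..<n]) = ?M (m.prd (map A [0..<n])) (?M (m.prd (map B [0..<n])) (m.prd (map C [0..<n])))"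
    unfolding Tf_def
  proof (rule m.reorder)
    show "\<forall>l. A l \<in> range (nrm d W) \<and> B l \<in> range (nrm d W) \<and> C l \<in> range (nrm d W)" using memN by blast
    show "\<forall>l m. m < l \<longrightarrow> l < n \<longrightarrow> ?M (B m) (A l) = ?M (A l) (B m) \<and> ?M (C m) (A l) = ?M (A l) (C m)
                  \<and> ?M (C m) (B l) = ?M (B l) (C m)"
      unfolding A_def B_def C_def mm_nrm_l mm_nrm_r
      by (intro allI impI conjI; rule cg') (use dt in auto)
  qed
  have reoR: "m.prd (map Tg [0..<n]) = ?M (m.prd (map C' [0..<n])) (?M (m.prd (map B' [0..<n])) (m.prd (map A' [0..<n])))"
    unfolding Tg_def
  proof (rule m.reorder)
    show "\<forall>l. C' l \<in> range (nrm d W) \<and> B' l \<in> range (nrm d W) \<and> A' l \<in> range (nrm d W)" using memN by blast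
    show "\<forall>l m. m < l \<longrightarrow> l < n \<longrightarrow> ?M (B' m) (C' l) = ?M (C' l) (B' m) \<and> ?M (A' m) (C' l) = ?M (C' l) (A' m)
                  \<and> ?M (A' m) (B' l) = ?M (B' l) (A' m)"
      unfolding A'_def B'_def C'_def mm_nrm_l mm_nrm_r
      by (intro allI impI conjI; rule cg') (use dt in auto)
  qed
  have step: "?M (Tf j) (q (Suc j)) = ?M (q j) (Tg j)" if "j < n" for j
  proof -
    have p: "ps ! j < b" using below nth_in[OF that] by auto
    have six: "six_space (ps!j) b c e \<subseteq> W" using nth_in[OF that]
      by (auto simp: six_space_def W_def S_def Z_def yb_space_def)
    note h = bte_lift[OF bte[of "col \<sigma> (Suc j)"] p bc ce finW six, where r=r]
    have s1: "m.prd [q (Suc j)] = q (Suc j)" "m.prd [A' j] = A' j" using memN m.prd_single by blast+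
    have p4: "m.prd [w,x,y,z] = ?M w (?M x (?M y (m.prd [z])))" for w x y z
      by (simp only: m.prd_Cons[of w] m.prd_Cons[of x] m.prd_Cons[of y])
    have e1: "?M (Tf j) (q (Suc j)) = m.prd [A j, B j, C j, q (Suc j)]"
      unfolding p4 s1 Tf_def by (simp only: m.assoc)
    have e2: "?M (q j) (Tg j) = m.prd [q j, C' j, B' j, A' j]"
      unfolding p4 s1 Tg_def by (simp only: m.assoc)
    show ?thesis unfolding e1 e2 using h
      by (simp add: prod_nrm A_def B_def C_def A'_def B'_def C'_def q_def col_simps)
  qed
  have tele: "?M (m.prd (map Tf [0..<n])) (q n) = ?M (q 0) (m.prd (map Tg [0..<n]))"
    by (rule m.tele) (use step memN in auto)
  have qn: "q n = q 0" using neven by (simp add: q_def col_def)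
  obtain Y where Y: "\<forall>u \<in> idx3 d. \<forall>w \<in> idx3 d.
      (\<Sum>v \<in> idx3 d. R3 (col \<sigma> 1) (r b) (r c) (r e) u v * Y v w) = (if u = w then 1 else 0) \<and>
      (\<Sum>v \<in> idx3 d. Y u v * R3 (col \<sigma> 1) (r b) (r c) (r e) v w) = (if u = w then 1 else 0)"
    using inv[of "col \<sigma> 1" "r b" "r c" "r e"] unfolding invertible3_def by blast
  define qi where "qi = nrm d W (loc W (b,c) (b,e) (c,e) Y)"
  have ZW: "{(b,c),(b,e),(c,e)} \<subseteq> W" by (auto simp: W_def Z_def)
  have q0qi: "?M (q 0) qi = ?e"
    unfolding q_def qi_def mm_nrm_l mm_nrm_r Xop_def
    by (rule loc_inv[OF finW dt ZW]) (use Y in simp)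
  have qiq0: "?M qi (q 0) = ?e"
    unfolding q_def qi_def mm_nrm_l mm_nrm_r Xop_def
    by (rule loc_inv[OF finW dt ZW]) (use Y in simp)
  have cyc: "trZ d Z (?M X qi) u i = trZ d Z (?M qi X) u i"
    if "valid d S u" "valid d S i" for X u i
  proof -
    have "loc W (b,c) (b,e) (c,e) Y = extend W Z (loc Z (b,c) (b,e) (c,e) Y)"
      by (rule loc_ext) (auto simp: Z_def W_def)
    then show ?thesis unfolding qi_def mm_nrm_l mm_nrm_r
      using trZ_cyc[OF finS finZ dis W_def that] by simp
  qed
  have main: "trZ d Z (?M (m.prd (map A [0..<n])) (?M (m.prd (map B [0..<n])) (m.prd (map C [0..<n])))) u i =
     trZ d Z (?M (m.prd (map C' [0..<n])) (?M (m.prd (map B' [0..<n])) (m.prd (map A' [0..<n])))) u i"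
    if vu: "valid d S u" and vi: "valid d S i" for u i
  proof -
    have "?M (m.prd (map A [0..<n])) (?M (m.prd (map B [0..<n])) (m.prd (map C [0..<n]))) =
          ?M (m.prd (map Tf [0..<n])) ?e" by (subst m.runit[OF m.prd_in]) (rule reoL[symmetric])
    also have "\<dots> = ?M (?M (m.prd (map Tf [0..<n])) (q n)) qi" by (simp only: qn m.assoc q0qi)
    also have "\<dots> = ?M (?M (q 0) (m.prd (map Tg [0..<n]))) qi" by (simp only: tele)
    finally have a: "?M (m.prd (map A [0..<n])) (?M (m.prd (map B [0..<n])) (m.prd (map C [0..<n]))) =
       ?M (?M (q 0) (m.prd (map Tg [0..<n]))) qi" .
    have b: "?M qi (?M (q 0) (m.prd (map Tg [0..<n]))) = m.prd (map Tg [0..<n])"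
      by (simp only: m.assoc[symmetric] qiq0 m.lunit[OF m.prd_in])
    have "trZ d Z (?M (m.prd (map A [0..<n])) (?M (m.prd (map B [0..<n])) (m.prd (map C [0..<n])))) u i =
          trZ d Z (?M (?M (q 0) (m.prd (map Tg [0..<n]))) qi) u i" by (simp only: a)
    also have "\<dots> = trZ d Z (?M qi (?M (q 0) (m.prd (map Tg [0..<n])))) u i" by (rule cyc[OF vu vi])
    also have "\<dots> = trZ d Z (m.prd (map Tg [0..<n])) u i" by (simp only: b)
    also have "\<dots> = trZ d Z (?M (m.prd (map C' [0..<n])) (?M (m.prd (map B' [0..<n])) (m.prd (map A' [0..<n])))) u i"
      by (simp only: reoR)
    finally show ?thesis .
  qed
  show ?thesis
    unfolding Let_def op_eq_def S_def[symmetric]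
    using LHS RHS main by simp
qed

end
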